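(* Assume (A1), (A2) and (A4). Let $\theta'\in(\underline{\theta},\overline{\theta}]$ and let $F_{\theta'}$ be the distribution $F$ conditional on $\theta\in[\underline{\theta},\theta']$. Suppose each type $\theta$ values the good at $\overline{u}(\theta)=v(x^e(\theta))+\theta x^e(\theta)$ (i.e., consumes its efficient quantity $x^e(\theta)$), and the seller charges a single uniform price $p$, selling to exactly the types with $\overline{u}(\theta)\ge p$. Then the revenue $p\cdot\Pr_{F_{\theta'}}(\overline{u}(\theta)\ge p)$ is maximized at $p=\overline{u}(\underline{\theta})$.
   Context: Fix $\underline{\theta}<\overline{\theta}$ and $\overline{x}>0$. The buyer's type $\theta\in[\underline{\theta},\overline{\theta}]$ has CDF $F$ with density $f$. (A1): $v:[0,\overline{x}]\to\mathbb{R}$ strictly concave, continuously differentiable, $v(0)=0$. $x^e(\theta)$ is the unique maximizer of $v(x')+\theta x'$ over $x'\in[0,\overline{x}]$. (A2): $0<m\le f\le M$ for constants $m,M$, and $\theta-\frac{1-F(\theta)}{f(\theta)}$ strictly increasing. (A4): $v(x^e(\theta))+\big(\theta-\frac{1-F(\theta)}{f(\theta)}\big)x^e(\theta)\ge0$ for all $\theta$. *)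

theory Defs
  imports "HOL-Analysis.Analysis"
begin

definition strict_concave_on :: "real set \<Rightarrow> (real \<Rightarrow> real) \<Rightarrow> bool" where
  "strict_concave_on S v \<longleftrightarrow>
     (\<forall>x\<in>S. \<forall>y\<in>S. x \<noteq> y \<longrightarrow> (\<forall>t::real. 0 < t \<and> t < 1 \<longrightarrow>
        t * v x + (1 - t) * v y < v (t * x + (1 - t) * y)))"

definition xe :: "(real \<Rightarrow> real) \<Rightarrow> real \<Rightarrow> real \<Rightarrow> real" where
  "xe v xbar \<theta> = (THE x. x \<in> {0..xbar} \<and>
       (\<forall>x'\<in>{0..xbar}. v x' + \<theta> * x' \<le> v x + \<theta> * x))"

definition ubar :: "(real \<Rightarrow> real) \<Rightarrow> real \<Rightarrow> real \<Rightarrow> real" where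
  "ubar v xbar \<theta> = v (xe v xbar \<theta>) + \<theta> * xe v xbar \<theta>"

text \<open>Revenue from uniform price p, types distributed with density f on [thl, th'],
  conditioned on theta in [thl, th'] (F th' = integral of f over [thl, th']).\<close>
definition revenue :: "(real \<Rightarrow> real) \<Rightarrow> real \<Rightarrow> (real \<Rightarrow> real) \<Rightarrow> real \<Rightarrow> real \<Rightarrow> real \<Rightarrow> real" where
  "revenue v xbar f thl th' p =
     p * (integral {\<theta> \<in> {thl..th'}. ubar v xbar \<theta> \<ge> p} f / integral {thl..th'} f)"

end

theory Submission
  imports Defs
begin

lemma xe_props:
  fixes v :: "real \<Rightarrow> real" and xbar \<theta> :: real
  assumes "xbar \<ge> 0" "strict_concave_on {0..xbar} v" "continuous_on {0..xbar} v"
  shows "xe v xbar \<theta> \<in> {0..xbar} \<and> (\<forall>x'\<in>{0..xbar}. v x' + \<theta> * x' \<le> v (xe v xbar \<theta>) + \<theta> * xe v xbar \<theta>)"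
proof -
  have c: "continuous_on {0..xbar} (\<lambda>x. v x + \<theta> * x)"
    by (intro continuous_intros assms(3))
  obtain x where x: "x \<in> {0..xbar}" "\<forall>y\<in>{0..xbar}. v y + \<theta> * y \<le> v x + \<theta> * x"
    using continuous_attains_sup[OF compact_Icc _ c] assms(1) by auto
  have u: "y = x" if "y \<in> {0..xbar}" "\<forall>z\<in>{0..xbar}. v z + \<theta> * z \<le> v y + \<theta> * y" for y
  proof (rule ccontr)
    assume ne: "y \<noteq> x"
    let ?m = "(1/2) * y + (1 - 1/2) * x"
    have cc: "\<forall>t::real. 0 < t \<and> t < 1 \<longrightarrow> t * v y + (1 - t) * v x < v (t * y + (1 - t) * x)"
      using assms(2) ne that(1) x(1) unfolding strict_concave_on_def by blast
    have "(1/2) * v y + (1 - 1/2) * v x < v ?m" using spec[OF cc, of "1/2"] by simp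
    moreover have "?m \<in> {0..xbar}" using that(1) x(1) by auto
    hence "v ?m + \<theta> * ?m \<le> v x + \<theta> * x" "v ?m + \<theta> * ?m \<le> v y + \<theta> * y"
      using x(2) that(2) by auto
    ultimately show False by (simp add: algebra_simps)
  qed
  have "\<exists>!x. x \<in> {0..xbar} \<and> (\<forall>x'\<in>{0..xbar}. v x' + \<theta> * x' \<le> v x + \<theta> * x)"
    using x u by blast
  from theI'[OF this] show ?thesis unfolding xe_def by blast
qed

lemma tele_mono:
  fixes H X :: "real \<Rightarrow> real" and a b C :: real
  assumes ab: "a \<le> b" and C: "C \<ge> 0"
    and loc: "\<And>s t. a \<le> s \<Longrightarrow> s \<le> t \<Longrightarrow> t \<le> b \<Longrightarrow> H s - H t \<ge> - ((t - s) * ((X t - X s) + C * (t - s)))"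
  shows "H b \<le> H a"
proof (rule ccontr)
  assume "\<not> H b \<le> H a"
  hence d: "H b - H a > 0" by simp
  define K where "K = \<bar>X b - X a\<bar> + C * (b - a) + 1"
  have K: "K > 0" using C ab unfolding K_def by (simp add: add_nonneg_pos)
  obtain n :: nat where n: "n > (b - a) * K / (H b - H a)"
    using reals_Archimedean2 by blast
  have npos: "n > 0"
  proof -
    have "(b - a) * K / (H b - H a) \<ge> 0" using ab K d by simp
    thus ?thesis using n by linarith
  qed
  define h where "h = (b - a) / n"
  have h0: "h \<ge> 0" using ab npos unfolding h_def by simp
  define p where "p k = a + real k * h" for k :: nat
  have pn: "p n = b" using npos unfolding p_def h_def by simp
  have p0: "p 0 = a" unfolding p_def by simp
  have pin: "a \<le> p k \<and> p k \<le> p (Suc k) \<and> p (Suc k) \<le> b" if "k < n" for k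
  proof -
    have "real (Suc k) * h \<le> real n * h" using that h0 by (intro mult_right_mono) auto
    moreover have "real n * h = b - a" using npos unfolding h_def by simp
    ultimately show ?thesis using h0 unfolding p_def by (auto simp: algebra_simps)
  qed
  have step: "H (p k) - H (p (Suc k)) \<ge> - (h * (X (p (Suc k)) - X (p k)) + C * h * h)" if "k < n" for k
  proof -
    have "p (Suc k) - p k = h" unfolding p_def by (simp add: algebra_simps)
    thus ?thesis using loc[of "p k" "p (Suc k)"] pin[OF that] by (simp add: algebra_simps)
  qed
  have "(\<Sum>k<n. H (p k) - H (p (Suc k))) \<ge> (\<Sum>k<n. - (h * (X (p (Suc k)) - X (p k)) + C * h * h))"
    by (rule sum_mono) (use step in auto)
  moreover have "(\<Sum>k<n. H (p k) - H (p (Suc k))) = H a - H b"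
    using sum_lessThan_telescope[of "\<lambda>k. - H (p k)" n] pn p0 by simp
  moreover have "(\<Sum>k<n. - (h * (X (p (Suc k)) - X (p k)) + C * h * h))
      = - (h * (X b - X a) + real n * (C * h * h))"
  proof -
    have "(\<Sum>k<n. X (p (Suc k)) - X (p k)) = X b - X a"
      using sum_lessThan_telescope[of "\<lambda>k. X (p k)" n] pn p0 by simp
    moreover have "(\<Sum>k<n. - (h * (X (p (Suc k)) - X (p k)) + C * h * h))
       = - (h * (\<Sum>k<n. X (p (Suc k)) - X (p k)) + real n * (C * h * h))"
    proof -
      have "(\<Sum>k<n. - (h * (X (p (Suc k)) - X (p k)) + C * h * h))
          = - ((\<Sum>k<n. h * (X (p (Suc k)) - X (p k))) + (\<Sum>k<n. C * h * h))"
        by (simp only: sum_negf sum.distrib)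
      also have "(\<Sum>k<n. h * (X (p (Suc k)) - X (p k))) = h * (\<Sum>k<n. X (p (Suc k)) - X (p k))"
        by (rule sum_distrib_left[symmetric])
      finally show ?thesis by simp
    qed
    ultimately show ?thesis by simp
  qed
  ultimately have "H a - H b \<ge> - (h * (X b - X a) + real n * (C * h * h))" by linarith
  moreover have "real n * (C * h * h) = h * (C * (b - a))" using npos unfolding h_def by simp
  moreover have "h * (X b - X a) \<le> h * \<bar>X b - X a\<bar>" using h0 by (intro mult_left_mono) auto
  ultimately have e1: "H b - H a \<le> h * (K - 1)" unfolding K_def by (simp add: algebra_simps)
  have e2: "h * (K - 1) < h * K"
  proof -
    have "a \<noteq> b" using d by auto
    hence "h > 0" using ab npos unfolding h_def by simp
    thus ?thesis by simp
  qed
  have e3: "h * K < H b - H a"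
  proof -
    have "(b - a) * K < real n * (H b - H a)" using n d by (simp add: field_simps)
    thus ?thesis unfolding h_def using npos by (simp add: field_simps)
  qed
  from e1 e2 e3 show False by linarith
qed

theorem lemma6:
  fixes v f F :: "real \<Rightarrow> real" and thl thh xbar th' m M :: real
  assumes thl_thh: "thl < thh" and xbar_pos: "xbar > 0"
    \<comment> \<open>(A1)\<close>
    and v_concave: "strict_concave_on {0..xbar} v"
    and v_C1: "\<exists>v'. (\<forall>x\<in>{0..xbar}. (v has_real_derivative v' x) (at x within {0..xbar}))
                    \<and> continuous_on {0..xbar} v'"
    and v0: "v 0 = 0"
    \<comment> \<open>F is the CDF on [thl, thh] with density f\<close>
    and f_int: "f integrable_on {thl..thh}"
    and F_def: "\<forall>\<theta>\<in>{thl..thh}. F \<theta> = integral {thl..\<theta>} f"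
    and F_top: "F thh = 1"
    \<comment> \<open>(A2)\<close>
    and m_pos: "0 < m" and f_bounds: "\<forall>\<theta>\<in>{thl..thh}. m \<le> f \<theta> \<and> f \<theta> \<le> M"
    and virt_mono: "strict_mono_on {thl..thh} (\<lambda>\<theta>. \<theta> - (1 - F \<theta>) / f \<theta>)"
    \<comment> \<open>(A4)\<close>
    and A4: "\<forall>\<theta>\<in>{thl..thh}. v (xe v xbar \<theta>) + (\<theta> - (1 - F \<theta>) / f \<theta>) * xe v xbar \<theta> \<ge> 0"
    \<comment> \<open>truncation point\<close>
    and th'_range: "th' \<in> {thl<..thh}"
  shows "\<forall>p::real. revenue v xbar f thl th' p \<le> revenue v xbar f thl th' (ubar v xbar thl)"
proof
  fix p :: real
  obtain v' where v': "\<forall>x\<in>{0..xbar}. (v has_real_derivative v' x) (at x within {0..xbar})"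
    using v_C1 by blast
  have vc: "continuous_on {0..xbar} v" by (rule DERIV_continuous_on) (use v' in blast)
  define X where "X = xe v xbar"
  define U where "U = ubar v xbar"
  have U_eq: "U \<theta> = v (X \<theta>) + \<theta> * X \<theta>" for \<theta> unfolding U_def X_def ubar_def by simp
  have Xp: "X \<theta> \<in> {0..xbar} \<and> (\<forall>x'\<in>{0..xbar}. v x' + \<theta> * x' \<le> v (X \<theta>) + \<theta> * X \<theta>)" for \<theta>
    unfolding X_def using xe_props[OF _ v_concave vc] xbar_pos by simp
  have X0: "0 \<le> X \<theta>" and Xb: "X \<theta> \<le> xbar" for \<theta> using Xp[of \<theta>] by auto
  have Uup: "U t - U s \<le> (t - s) * X t" for s t
    using Xp[of s] Xp[of t] unfolding U_eq by (auto simp: algebra_simps)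
  have Ulo: "U t - U s \<ge> (t - s) * X s" for s t
    using Xp[of s] Xp[of t] unfolding U_eq by (auto simp: algebra_simps)
  have Xmono: "X s \<le> X t" if "s < t" for s t
  proof -
    have "(t - s) * X s \<le> (t - s) * X t" using Uup[of t s] Ulo[of t s] by linarith
    thus ?thesis using that by simp
  qed
  have Umono: "U s \<le> U t" if "s \<le> t" for s t
    using Ulo[of t s] X0[of s] that by (smt (verit) mult_nonneg_nonneg)
  have U0: "U \<theta> \<ge> 0" for \<theta>
  proof -
    have "(0::real) \<in> {0..xbar}" using xbar_pos by simp
    hence "v 0 + \<theta> * 0 \<le> v (X \<theta>) + \<theta> * X \<theta>" using Xp[of \<theta>] by blast
    thus ?thesis using v0 unfolding U_eq by simp
  qed
  have Ulip: "\<bar>U t - U s\<bar> \<le> xbar * \<bar>t - s\<bar>" for s t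
  proof (cases "s \<le> t")
    case True
    have "U t - U s \<le> (t - s) * xbar" using Uup[of t s] Xb[of t] True
      by (smt (verit) mult_left_mono)
    thus ?thesis using Umono[OF True] True by (simp add: mult.commute)
  next
    case False
    have "U s - U t \<le> (s - t) * xbar" using Uup[of s t] Xb[of s] False
      by (smt (verit) mult_left_mono)
    thus ?thesis using Umono[of t s] False by (simp add: mult.commute)
  qed
  have Ucont: "continuous_on A U" for A
    by (rule lipschitz_on_continuous_on[of xbar]) (use Ulip xbar_pos in \<open>auto simp: lipschitz_on_def dist_real_def\<close>)
  have th': "thl < th'" "th' \<le> thh" using th'_range by auto
  have Fint: "F t - F s = integral {s..t} f" if "thl \<le> s" "s \<le> t" "t \<le> thh" for s t
  proof -
    have "f integrable_on {thl..t}" using integrable_subinterval_real[OF f_int] that by auto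
    from Henstock_Kurzweil_Integration.integral_combine[OF that(1,2) this] show ?thesis using F_def that by auto
  qed
  have fint: "f integrable_on {s..t}" if "thl \<le> s" "t \<le> thh" for s t
    using integrable_subinterval_real[OF f_int] that by auto
  have Ilo: "integral {s..t} f \<ge> m * (t - s)" and Ihi: "integral {s..t} f \<le> M * (t - s)"
    if "thl \<le> s" "s \<le> t" "t \<le> thh" for s t
  proof -
    have "integral {s..t} (\<lambda>_. m) \<le> integral {s..t} f"
      by (rule integral_le) (use fint that f_bounds in auto)
    thus "integral {s..t} f \<ge> m * (t - s)" using that by (simp add: mult.commute)
    have "integral {s..t} f \<le> integral {s..t} (\<lambda>_. M)"
      by (rule integral_le) (use fint that f_bounds in auto)
    thus "integral {s..t} f \<le> M * (t - s)" using that by (simp add: mult.commute)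
  qed
  have Fthl: "F thl = 0" using F_def thl_thh by simp
  have Fmono: "F s \<le> F t" if "thl \<le> s" "s \<le> t" "t \<le> thh" for s t
    using Fint[OF that] Ilo[OF that] m_pos that by (smt (verit) mult_nonneg_nonneg)
  have Fth'pos: "F th' > 0"
    using Fint[of thl th'] Ilo[of thl th'] th' Fthl m_pos by (smt (verit) mult_pos_pos)
  have Fle1: "F th' \<le> 1" using Fmono[of th' thh] th' F_top by simp
  have A4': "U \<theta> * f \<theta> \<ge> X \<theta> * (1 - F \<theta>)" if "\<theta> \<in> {thl..thh}" for \<theta>
  proof -
    have fp: "f \<theta> > 0" using f_bounds that m_pos by force
    have "v (X \<theta>) + (\<theta> - (1 - F \<theta>) / f \<theta>) * X \<theta> \<ge> 0" using A4 that unfolding X_def by blast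
    hence "U \<theta> - (1 - F \<theta>) / f \<theta> * X \<theta> \<ge> 0" unfolding U_eq by (simp add: algebra_simps)
    hence "(U \<theta> - (1 - F \<theta>) / f \<theta> * X \<theta>) * f \<theta> \<ge> 0" using fp by simp
    moreover have "(1 - F \<theta>) / f \<theta> * X \<theta> * f \<theta> = X \<theta> * (1 - F \<theta>)" using fp by simp
    ultimately show ?thesis by (simp add: left_diff_distrib)
  qed
  define G where "G t = F th' - F t" for t
  define H where "H t = U t * G t" for t
  have Hdec: "H t \<le> H thl" if "thl \<le> t" "t \<le> th'" for t
  proof (rule tele_mono[where a=thl and b=t and C="xbar * M" and H=H and X=X])
    show "thl \<le> t" by fact
    show "0 \<le> xbar * M"
    proof -
      have "m \<le> M" using f_bounds thl_thh by fastforce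
      thus ?thesis using xbar_pos m_pos by simp
    qed
    fix s r assume sr: "thl \<le> s" "s \<le> r" "r \<le> t"
    have rth: "r \<le> thh" "r \<le> th'" using sr that th' by auto
    define I where "I = integral {s..r} f"
    have GI: "G s = G r + I" using Fint[of s r] sr rth unfolding G_def I_def by simp
    have I0: "0 \<le> I" and IM: "I \<le> M * (r - s)" using Ilo[of s r] Ihi[of s r] sr rth m_pos
      unfolding I_def by (auto intro: order_trans[rotated])
    have G0: "0 \<le> G r" using Fmono[of r th'] sr rth th' unfolding G_def by simp
    have G1: "G r \<le> 1" using Fmono[of thl r] sr rth Fthl Fle1 unfolding G_def by simp
    have Xsr: "X s \<le> X r" using Xmono[of s r] sr by (cases "s = r") auto
    have e: "(r - s) * (X s * G r) \<le> U r * I"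
    proof -
      have "integral {s..r} (\<lambda>_. X s * G r) \<le> integral {s..r} (\<lambda>\<theta>. U r * f \<theta>)"
      proof (rule integral_le)
        show "(\<lambda>\<theta>. U r * f \<theta>) integrable_on {s..r}"
          using integrable_on_cmult_left[OF fint[of s r], of "U r"] sr rth by simp
        fix \<theta> assume th: "\<theta> \<in> {s..r}"
        have thin: "\<theta> \<in> {thl..thh}" using th sr rth by auto
        have fp: "f \<theta> > 0" using f_bounds thin m_pos by force
        have "X s * G r \<le> X \<theta> * (1 - F \<theta>)"
        proof (rule mult_mono)
          show "X s \<le> X \<theta>" using Xmono[of s \<theta>] th by (cases "s = \<theta>") auto
          show "G r \<le> 1 - F \<theta>" using Fmono[of \<theta> r] th sr rth Fle1 unfolding G_def by auto
          show "0 \<le> X \<theta>" by (rule X0)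
          show "0 \<le> G r" by (rule G0)
        qed
        also have "\<dots> \<le> U \<theta> * f \<theta>" using A4'[OF thin] .
        also have "\<dots> \<le> U r * f \<theta>" using Umono[of \<theta> r] th fp by (intro mult_right_mono) auto
        finally show "X s * G r \<le> U r * f \<theta>" .
      qed auto
      thus ?thesis using sr unfolding I_def integral_mult[OF fint[of s r], symmetric] using rth by (simp add: ac_simps)
    qed
    have d1: "(U r - U s) * G r \<le> (r - s) * X r * G r"
      using Uup[of r s] G0 by (intro mult_right_mono) auto
    have d2: "(U r - U s) * I \<le> ((r - s) * xbar) * (M * (r - s))"
    proof (rule mult_mono)
      show "U r - U s \<le> (r - s) * xbar" using Ulip[of s r] sr by (simp add: mult.commute abs_le_iff)
      show "I \<le> M * (r - s)" by (rule IM)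
      show "0 \<le> (r - s) * xbar" using sr xbar_pos by simp
      show "0 \<le> I" by (rule I0)
    qed
    have d3: "(r - s) * (X r - X s) * G r \<le> (r - s) * (X r - X s)"
      using G1 Xsr sr by (intro mult_left_mono[of "G r" 1, simplified]) auto
    have "H s - H r = U r * I - (U r - U s) * I - (U r - U s) * G r"
      unfolding H_def GI by (simp add: algebra_simps)
    also have "\<dots> \<ge> (r - s) * (X s * G r) - ((r - s) * xbar) * (M * (r - s)) - (r - s) * X r * G r"
      using e d1 d2 by linarith
    finally have "H s - H r \<ge> - ((r - s) * (X r - X s) * G r) - ((r - s) * xbar) * (M * (r - s))"
      by (simp add: algebra_simps)
    thus "- ((r - s) * ((X r - X s) + xbar * M * (r - s))) \<le> H s - H r"
      using d3 by (simp add: algebra_simps)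
  qed
  have full: "{\<theta> \<in> {thl..th'}. U \<theta> \<ge> q} = {thl..th'}" if "q \<le> U thl" for q
    using Umono[of thl] that by force
  have intfull: "integral {thl..th'} f = F th'" using F_def th' by simp
  have Rtop: "revenue v xbar f thl th' (U thl) = U thl"
    unfolding revenue_def U_def[symmetric] full[OF order_refl] intfull using Fth'pos by simp
  show "revenue v xbar f thl th' p \<le> revenue v xbar f thl th' (ubar v xbar thl)"
    unfolding U_def[symmetric] Rtop
  proof (cases "p \<le> U thl")
    case True
    show "revenue v xbar f thl th' p \<le> U thl"
      unfolding revenue_def U_def[symmetric] full[OF True] intfull using Fth'pos True by simp
  next
    case False
    define S where "S = {\<theta> \<in> {thl..th'}. U \<theta> \<ge> p}"
    show "revenue v xbar f thl th' p \<le> U thl"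
    proof (cases "S = {}")
      case True
      thus ?thesis unfolding revenue_def U_def[symmetric] S_def[symmetric] using U0[of thl] by simp
    next
      case ne: False
      define t where "t = Inf S"
      have clS: "closed S" unfolding S_def
        by (rule continuous_on_closed_Collect_le) (auto intro: Ucont continuous_intros)
      have bS: "bdd_below S" unfolding S_def by (rule bdd_belowI[of _ thl]) auto
      have tS: "t \<in> S" unfolding t_def using closed_contains_Inf[OF ne bS clS] .
      have Seq: "S = {t..th'}"
      proof
        show "S \<subseteq> {t..th'}" unfolding t_def using cInf_lower[OF _ bS] unfolding S_def by auto
        show "{t..th'} \<subseteq> S" using tS Umono unfolding S_def by (force intro: order_trans)
      qed
      have tin: "thl \<le> t" "t \<le> th'" "p \<le> U t" using tS unfolding S_def by auto
      have intS: "integral S f = G t"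
        unfolding Seq G_def using Fint[of t th'] tin th' by simp
      have "p * G t \<le> U t * G t"
        using tin Fmono[of t th'] th' unfolding G_def by (intro mult_right_mono) auto
      also have "\<dots> \<le> U thl * F th'" using Hdec[of t] tin Fthl unfolding H_def G_def by simp
      finally have "p * G t / F th' \<le> U thl" using Fth'pos by (simp add: divide_le_eq)
      thus ?thesis unfolding revenue_def U_def[symmetric] S_def[symmetric] intS intfull by simp
    qed
  qed
qed

end
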